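(* A family of structures $\mathfrak{K}$ is $\mathbf{co}$-learnable if and only if $\mathfrak{K}$ is a $\Sigma^{\mathrm{inf}}_1$-antichain, i.e., for any two distinct $\mathcal{A},\mathcal{B}\in\mathfrak{K}$ there are $\Sigma^{\mathrm{inf}}_1$ sentences $\varphi,\psi$ with $\mathcal{A}\models\varphi$, $\mathcal{B}\not\models\varphi$, $\mathcal{B}\models\psi$, $\mathcal{A}\not\models\psi$ (equivalently, the $\Sigma^{\mathrm{inf}}_1$-theories of members of $\mathfrak{K}$ are pairwise $\subseteq$-incomparable).
   Context: All structures are countable, have domain $\mathbb{N}$, are in a finite relational signature, and are identified with their atomic diagrams. A family of structures $\mathfrak{K}$ is a countable set of pairwise nonisomorphic such structures. For a structure $\mathcal{S}$ and $s\in\mathbb{N}$, $\mathcal{S}\restriction_s$ denotes the finite substructure with domain $\{0,\dots,s\}$. $\mathrm{LD}(\mathfrak{K})$ is the set of all structures with domain $\mathbb{N}$ isomorphic to some member of $\mathfrak{K}$. The hypothesis space is $\{\ulcorner\mathcal{A}\urcorner:\mathcal{A}\in\mathfrak{K}\}\cup\{?\}$ (pairwise distinct formal symbols); a learner is an arbitrary function $\mathbf{M}$ from $\{\mathcal{S}\restriction_s:\mathcal{S}\in\mathrm{LD}(\mathfrak{K}),s\in\mathbb{N}\}$ to the hypothesis space. $\mathfrak{K}$ is $\mathbf{co}$-learnable if there is a learner $\mathbf{M}$ such that for every $\mathcal{S}\in\mathrm{LD}(\mathfrak{K})$, $\{\mathbf{M}(\mathcal{S}\restriction_s):s\in\mathbb{N}\}\setminus\{?\}=\{\ulcorner\mathcal{B}\urcorner:\mathcal{B}\in\mathfrak{K},\mathcal{B}\neq\mathcal{A}\}$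 where $\mathcal{A}\in\mathfrak{K}$ is isomorphic to $\mathcal{S}$ (i.e., the only conjecture never output is the correct one). The $\Sigma^{\mathrm{inf}}_n$-theory of $\mathcal{A}$ is the set of $\Sigma^{\mathrm{inf}}_n$ sentences true in $\mathcal{A}$. Infinitary logic: $\Sigma^{\mathrm{inf}}_0=\Pi^{\mathrm{inf}}_0$ formulas are finitary quantifier-free formulas; a $\Sigma^{\mathrm{inf}}_\alpha$ formula is a countable disjunction $\bigvee_{i}\exists\bar y_i\,\psi_i$ with each $\psi_i\in\Pi^{\mathrm{inf}}_{\beta_i}$, $\beta_i<\alpha$; a $\Pi^{\mathrm{inf}}_\alpha$ formula is a countable conjunction $\bigwedge_i\forall\bar y_i\,\psi_i$ with each $\psi_i\in\Sigma^{\mathrm{inf}}_{\beta_i}$, $\beta_i<\alpha$ (free variables among a fixed finite tuple). *)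

theory Defs
  imports Main "HOL-Library.Countable_Set"
begin

text \<open>A finite relational signature is a list of arities: relation symbol i (for i < length sig)
has arity sig ! i. A structure with domain nat is identified with its atomic diagram:
a predicate R i xs, which must be False outside the signature.\<close>

type_synonym struc = "nat \<Rightarrow> nat list \<Rightarrow> bool"

definition wf_struc :: "nat list \<Rightarrow> struc \<Rightarrow> bool" where
  "wf_struc sig A \<longleftrightarrow> (\<forall>i xs. A i xs \<longrightarrow> i < length sig \<and> length xs = sig ! i)"

definition iso :: "struc \<Rightarrow> struc \<Rightarrow> bool" where
  "iso A B \<longleftrightarrow> (\<exists>f. bij f \<and> (\<forall>i xs. A i xs \<longleftrightarrow> B i (map f xs)))"

definition family :: "nat list \<Rightarrow> struc set \<Rightarrow> bool" where
  "family sig K \<longleftrightarrow> countable K \<and> (\<forall>A\<in>K. wf_struc sig A)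
     \<and> (\<forall>A\<in>K. \<forall>B\<in>K. A \<noteq> B \<longrightarrow> \<not> iso A B)"

definition LD :: "struc set \<Rightarrow> struc set" where
  "LD K = {S. \<exists>A\<in>K. iso S A}"

definition restr :: "struc \<Rightarrow> nat \<Rightarrow> nat \<times> struc" where
  "restr S s = (s, \<lambda>i xs. S i xs \<and> set xs \<subseteq> {0..s})"

text \<open>Hypotheses: Some A stands for the code of A, None for '?'.\<close>
definition co_learnable :: "nat list \<Rightarrow> struc set \<Rightarrow> bool" where
  "co_learnable sig K \<longleftrightarrow> (\<exists>M :: nat \<times> struc \<Rightarrow> struc option.
     (\<forall>x. M x \<in> insert None (Some ` K)) \<and>
     (\<forall>S\<in>LD K. \<forall>A\<in>K. iso S A \<longrightarrow>
        {M (restr S s) | s. True} - {None} = Some ` (K - {A})))"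

datatype qf = Atom nat "nat list" | Eq nat nat | Neg qf | Conj qf qf | Disj qf qf | Tru

fun qf_vars :: "qf \<Rightarrow> nat set" where
  "qf_vars (Atom i xs) = set xs"
| "qf_vars (Eq x y) = {x, y}"
| "qf_vars (Neg p) = qf_vars p"
| "qf_vars (Conj p q) = qf_vars p \<union> qf_vars q"
| "qf_vars (Disj p q) = qf_vars p \<union> qf_vars q"
| "qf_vars Tru = {}"

fun qf_wf :: "nat list \<Rightarrow> qf \<Rightarrow> bool" where
  "qf_wf sig (Atom i xs) \<longleftrightarrow> i < length sig \<and> length xs = sig ! i"
| "qf_wf sig (Eq x y) \<longleftrightarrow> True"
| "qf_wf sig (Neg p) \<longleftrightarrow> qf_wf sig p"
| "qf_wf sig (Conj p q) \<longleftrightarrow> qf_wf sig p \<and> qf_wf sig q"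
| "qf_wf sig (Disj p q) \<longleftrightarrow> qf_wf sig p \<and> qf_wf sig q"
| "qf_wf sig Tru \<longleftrightarrow> True"

fun qf_sat :: "struc \<Rightarrow> (nat \<Rightarrow> nat) \<Rightarrow> qf \<Rightarrow> bool" where
  "qf_sat A v (Atom i xs) \<longleftrightarrow> A i (map v xs)"
| "qf_sat A v (Eq x y) \<longleftrightarrow> v x = v y"
| "qf_sat A v (Neg p) \<longleftrightarrow> \<not> qf_sat A v p"
| "qf_sat A v (Conj p q) \<longleftrightarrow> qf_sat A v p \<and> qf_sat A v q"
| "qf_sat A v (Disj p q) \<longleftrightarrow> qf_sat A v p \<or> qf_sat A v q"
| "qf_sat A v Tru \<longleftrightarrow> True"

text \<open>A Sigma^inf_1 sentence: a countable disjunction of sentences \<exists>y_0..y_{n-1}. psi,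
 psi quantifier-free with variables among y_0..y_{n-1}; represented as a set of pairs (n, psi).\<close>
definition sigma1_sentence :: "nat list \<Rightarrow> (nat \<times> qf) set \<Rightarrow> bool" where
  "sigma1_sentence sig \<Phi> \<longleftrightarrow> countable \<Phi> \<and>
     (\<forall>(n, \<psi>)\<in>\<Phi>. qf_wf sig \<psi> \<and> qf_vars \<psi> \<subseteq> {..<n})"

definition sigma1_sat :: "struc \<Rightarrow> (nat \<times> qf) set \<Rightarrow> bool" where
  "sigma1_sat A \<Phi> \<longleftrightarrow> (\<exists>(n, \<psi>)\<in>\<Phi>. \<exists>v. qf_sat A v \<psi>)"

definition sigma1_antichain :: "nat list \<Rightarrow> struc set \<Rightarrow> bool" where
  "sigma1_antichain sig K \<longleftrightarrow> (\<forall>A\<in>K. \<forall>B\<in>K. A \<noteq> B \<longrightarrow>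
     (\<exists>\<phi> \<psi>. sigma1_sentence sig \<phi> \<and> sigma1_sentence sig \<psi> \<and>
        sigma1_sat A \<phi> \<and> \<not> sigma1_sat B \<phi> \<and> sigma1_sat B \<psi> \<and> \<not> sigma1_sat A \<psi>))"

end

theory Submission imports Defs begin

lemma qf_sat_iso:
  assumes "inj f" "\<And>i xs. S i xs \<longleftrightarrow> B i (map f xs)"
  shows "qf_sat S v p \<longleftrightarrow> qf_sat B (f \<circ> v) p"
  using assms by (induction p) (auto simp: inj_eq)

lemma qf_sat_restr:
  assumes "\<forall>x\<in>qf_vars p. v x \<le> s"
  shows "qf_sat (snd (restr S s)) v p \<longleftrightarrow> qf_sat S v p"
  using assms by (induction p) (auto simp: restr_def)

lemma finite_qf_vars: "finite (qf_vars p)"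
  by (induction p) auto

definition conjs :: "qf list \<Rightarrow> qf" where "conjs l = foldr Conj l Tru"

lemma conjs_sat: "qf_sat A v (conjs l) \<longleftrightarrow> (\<forall>p\<in>set l. qf_sat A v p)"
  unfolding conjs_def by (induction l) auto
lemma conjs_wf: "qf_wf sig (conjs l) \<longleftrightarrow> (\<forall>p\<in>set l. qf_wf sig p)"
  unfolding conjs_def by (induction l) auto
lemma conjs_vars: "qf_vars (conjs l) = (\<Union>p\<in>set l. qf_vars p)"
  unfolding conjs_def by (induction l) auto

definition lit :: "struc \<Rightarrow> nat \<Rightarrow> nat list \<Rightarrow> qf" where
  "lit A i xs = (if A i xs then Atom i xs else Neg (Atom i xs))"

definition diag :: "nat list \<Rightarrow> struc \<Rightarrow> nat \<Rightarrow> qf" where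
  "diag sig A s = Conj
     (conjs [lit A i xs. i \<leftarrow> [0..<length sig], xs \<leftarrow> List.n_lists (sig!i) [0..<Suc s]])
     (conjs [Neg (Eq x y). x \<leftarrow> [0..<Suc s], y \<leftarrow> [0..<Suc s], x \<noteq> y])"

lemma diag_sat: "qf_sat B v (diag sig A s) \<longleftrightarrow>
  (\<forall>i<length sig. \<forall>xs. length xs = sig!i \<and> set xs \<subseteq> {0..s} \<longrightarrow> (B i (map v xs) \<longleftrightarrow> A i xs))
  \<and> (\<forall>x\<le>s. \<forall>y\<le>s. x \<noteq> y \<longrightarrow> v x \<noteq> v y)"
proof -
  have e: "{0..<Suc s} = {0..s}" by auto
  show ?thesis
    unfolding diag_def qf_sat.simps conjs_sat set_concat set_map
    apply (auto simp: lit_def set_n_lists e simp del: upt_Suc split: if_splits)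
     apply (metis (mono_tags, lifting) IntI atLeastLessThan_iff image_eqI le0 mem_Collect_eq qf_sat.simps(1,3) UnI2)
    apply (metis (mono_tags, lifting) IntI atLeastLessThan_iff image_eqI le0 mem_Collect_eq qf_sat.simps(1) UnI1)
    done
qed

lemma diag_wf: "qf_wf sig (diag sig A s)"
  by (auto simp: diag_def conjs_wf set_n_lists lit_def)

lemma diag_vars: "qf_vars (diag sig A s) \<subseteq> {..<Suc s}"
  by (auto simp: diag_def conjs_vars set_n_lists lit_def split: if_splits)

lemma extend_bij:
  fixes v :: "nat \<Rightarrow> nat"
  assumes "inj_on v {..s}"
  shows "\<exists>f. bij f \<and> (\<forall>i\<le>s. f i = v i)"
proof -
  let ?T = "v ` {..s}"
  have inf: "infinite (- ?T)" unfolding Compl_eq_Diff_UNIV by (metis Diff_infinite_finite finite_imageI finite_atMost infinite_UNIV_nat)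
  let ?e = "enumerate (- ?T)"
  have be: "bij_betw ?e UNIV (- ?T)" using bij_enumerate[OF inf] .
  define f where "f i = (if i \<le> s then v i else ?e (i - Suc s))" for i
  have "inj f"
  proof (rule injI)
    fix a b assume fab: "f a = f b"
    show "a = b"
    proof (cases "a \<le> s"; cases "b \<le> s")
      assume "a \<le> s" "b \<le> s" thus ?thesis using fab assms by (auto simp: f_def inj_on_def)
    next
      assume "a \<le> s" "\<not> b \<le> s" thus ?thesis using fab enumerate_in_set[OF inf, of "b - Suc s"]
        by (auto simp: f_def) (metis atMost_iff image_eqI)
    next
      assume "\<not> a \<le> s" "b \<le> s" thus ?thesis using fab enumerate_in_set[OF inf, of "a - Suc s"]
        by (auto simp: f_def)
    next
        assume h: "\<not> a \<le> s" "\<not> b \<le> s"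
        then have "?e (a - Suc s) = ?e (b - Suc s)" using fab by (simp add: f_def)
        then have "a - Suc s = b - Suc s" using bij_betw_imp_inj_on[OF be] by (simp add: inj_on_def)
        then show ?thesis using h by arith
    qed
  qed
  moreover have "surj f"
  proof -
    { fix y
      have "y \<in> range f"
      proof (cases "y \<in> ?T")
        case True then obtain i where "i \<le> s" "y = v i" by auto
        then show ?thesis by (metis f_def rangeI)
      next
        case False
        then obtain k where "y = ?e k" using bij_betw_imp_surj_on[OF be] by blast
        then have "f (k + Suc s) = y" by (simp add: f_def)
        then show ?thesis by (metis rangeI)
      qed }
    then show ?thesis by auto
  qed
  ultimately show ?thesis by (auto simp: bij_def f_def)
qed

lemma iso_refl: "iso A A"
  unfolding iso_def by (rule exI[of _ id]) auto

lemma learn_sep: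
  assumes fam: "family sig K" and cl: "co_learnable sig K" and AK: "A \<in> K" and BK: "B \<in> K"
    and AB: "A \<noteq> B"
  shows "\<exists>\<phi>. sigma1_sentence sig \<phi> \<and> sigma1_sat A \<phi> \<and> \<not> sigma1_sat B \<phi>"
proof -
  obtain M :: "nat \<times> struc \<Rightarrow> struc option" where
    Mc: "\<forall>S\<in>LD K. \<forall>A\<in>K. iso S A \<longrightarrow> {M (restr S s) | s. True} - {None} = Some ` (K - {A})"
    using cl unfolding co_learnable_def by blast
  have wfA: "wf_struc sig A" and wfB: "wf_struc sig B" using fam AK BK by (auto simp: family_def)
  have "A \<in> LD K" using AK iso_refl by (auto simp: LD_def)
  then have "{M (restr A s) | s. True} - {None} = Some ` (K - {A})" using Mc AK iso_refl by blast
  moreover have "Some B \<in> Some ` (K - {A})" using BK AB by auto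
  ultimately have "Some B \<in> {M (restr A s) | s. True}" by (metis DiffD1)
  then obtain s where Ms: "M (restr A s) = Some B" by auto
  let ?\<phi> = "{(Suc s, diag sig A s)}"
  have "sigma1_sentence sig ?\<phi>" using diag_wf diag_vars by (auto simp: sigma1_sentence_def)
  moreover have "sigma1_sat A ?\<phi>"
    unfolding sigma1_sat_def by (auto intro!: exI[of _ id] simp: diag_sat)
  moreover have "\<not> sigma1_sat B ?\<phi>"
  proof
    assume "sigma1_sat B ?\<phi>"
    then obtain v where v: "qf_sat B v (diag sig A s)" by (auto simp: sigma1_sat_def)
    then have d1: "\<forall>i<length sig. \<forall>xs. length xs = sig!i \<and> set xs \<subseteq> {0..s} \<longrightarrow> (B i (map v xs) \<longleftrightarrow> A i xs)"
      and d2: "\<forall>x\<le>s. \<forall>y\<le>s. x \<noteq> y \<longrightarrow> v x \<noteq> v y" by (auto simp: diag_sat)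
    have "inj_on v {..s}" using d2 by (auto simp: inj_on_def)
    then obtain f where bf: "bij f" and fv: "\<forall>i\<le>s. f i = v i" using extend_bij by blast
    define S where "S i xs = B i (map f xs)" for i xs
    have "iso S B" unfolding iso_def S_def using bf by blast
    then have SL: "S \<in> LD K" using BK by (auto simp: LD_def)
    have "restr S s = restr A s"
      unfolding restr_def
    proof (intro arg_cong[where f="Pair s"] ext)
      fix i xs
      show "(S i xs \<and> set xs \<subseteq> {0..s}) = (A i xs \<and> set xs \<subseteq> {0..s})"
      proof (cases "set xs \<subseteq> {0..s}")
        case True
        then have "map f xs = map v xs" using fv by (auto intro!: map_cong)
        then have Si: "S i xs = B i (map v xs)" unfolding S_def by metis
        show ?thesis
        proof (cases "i < length sig \<and> length xs = sig ! i")
          case True then show ?thesis using d1 Si \<open>set xs \<subseteq> {0..s}\<close> by auto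
        next
          case False then show ?thesis using wfA wfB Si unfolding wf_struc_def by (metis length_map)
        qed
      qed auto
    qed
    have "{M (restr S s) | s. True} - {None} = Some ` (K - {B})" using Mc SL BK \<open>iso S B\<close> by blast
    moreover have "Some B \<in> {M (restr S s') | s'. True} - {None}"
      using Ms \<open>restr S s = restr A s\<close> by (auto intro!: exI[of _ s])
    ultimately show False by auto
  qed
  ultimately show ?thesis by blast
qed

lemma sep_learn:
  assumes fam: "family sig K" and ac: "sigma1_antichain sig K"
  shows "co_learnable sig K"
proof (cases "K = {}")
  case True
  then show ?thesis unfolding co_learnable_def by (intro exI[of _ "\<lambda>_. None"]) auto
next
  case Kne: False
  have cK: "countable K" using fam by (simp add: family_def)
  define E where "E = from_nat_into K"
  define P where "P s R B \<longleftrightarrow> (\<exists>\<psi>. \<not> (\<exists>v. qf_sat B v \<psi>) \<and>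
       (\<exists>v. (\<forall>x\<in>qf_vars \<psi>. v x \<le> s) \<and> qf_sat R v \<psi>))" for s R B
  define M where "M x = (if P (fst x) (snd x) (E (fst (prod_decode (fst x))))
       then Some (E (fst (prod_decode (fst x)))) else None)" for x
  have EK: "E k \<in> K" for k using Kne by (simp add: E_def from_nat_into)
  have "\<forall>x. M x \<in> insert None (Some ` K)" using EK by (auto simp: M_def)
  moreover have "{M (restr S s) | s. True} - {None} = Some ` (K - {A})"
    if SL: "S \<in> LD K" and AK: "A \<in> K" and SA: "iso S A" for S A
  proof -
    obtain f where bf: "bij f" and Sf: "\<And>i xs. S i xs \<longleftrightarrow> A i (map f xs)"
      using SA unfolding iso_def by blast
    have key: "B \<noteq> A" if "P s (snd (restr S s)) B" for s B
    proof
      assume BA: "B = A"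
      from that obtain \<psi> v where n: "\<not> (\<exists>v. qf_sat B v \<psi>)" and b: "\<forall>x\<in>qf_vars \<psi>. v x \<le> s"
        and q: "qf_sat (snd (restr S s)) v \<psi>" unfolding P_def by blast
      have "qf_sat S v \<psi>" using q qf_sat_restr[OF b] by simp
      then have "qf_sat A (f \<circ> v) \<psi>" using qf_sat_iso[of f S A v \<psi>] bf Sf bij_is_inj by blast
      then show False using n BA by blast
    qed
    show ?thesis
    proof (intro equalityI subsetI)
      fix x assume "x \<in> {M (restr S s) | s. True} - {None}"
      then obtain s where xs: "x = M (restr S s)" "x \<noteq> None" by auto
      let ?B = "E (fst (prod_decode s))"
      have "P s (snd (restr S s)) ?B" and "x = Some ?B" using xs
        by (auto simp: M_def restr_def split: if_splits)
      then show "x \<in> Some ` (K - {A})" using key EK by blast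
    next
      fix x assume "x \<in> Some ` (K - {A})"
      then obtain B where xB: "x = Some B" and BK: "B \<in> K" and BA: "B \<noteq> A" by auto
      obtain \<phi> where "sigma1_sat A \<phi>" "\<not> sigma1_sat B \<phi>"
        using ac AK BK BA unfolding sigma1_antichain_def by metis
      then obtain n \<psi> v where "(n, \<psi>) \<in> \<phi>" and qA: "qf_sat A v \<psi>" and nB: "\<not> (\<exists>v. qf_sat B v \<psi>)"
        unfolding sigma1_sat_def by blast
      define w where "w = inv f \<circ> v"
      have "f \<circ> w = v" unfolding w_def using bf by (auto simp: bij_def surj_f_inv_f)
      then have qS: "qf_sat S w \<psi>" using qf_sat_iso[of f S A w \<psi>] bf Sf bij_is_inj qA by metis
      obtain k where Ek: "E k = B" using from_nat_into_surj[OF cK BK] E_def by blast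
      define s0 where "s0 = Max (insert 0 (w ` qf_vars \<psi>))"
      define s where "s = prod_encode (k, s0)"
      have "\<forall>x\<in>qf_vars \<psi>. w x \<le> s"
      proof
        fix x assume "x \<in> qf_vars \<psi>"
        then have "w x \<le> s0" unfolding s0_def using finite_qf_vars by (intro Max_ge) auto
        also have "s0 \<le> s" unfolding s_def by (rule le_prod_encode_2)
        finally show "w x \<le> s" .
      qed
      then have "P s (snd (restr S s)) B" unfolding P_def using nB qS qf_sat_restr by blast
      then have "M (restr S s) = Some B" using Ek by (simp add: M_def s_def restr_def)
      then show "x \<in> {M (restr S s) | s. True} - {None}" using xB by (auto intro!: exI[of _ s])
    qed
  qed
  ultimately show ?thesis unfolding co_learnable_def by blast
qed

theorem mainTheorem4:
  assumes "family sig K"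
  shows "co_learnable sig K \<longleftrightarrow> sigma1_antichain sig K"
proof
  assume "co_learnable sig K"
  then show "sigma1_antichain sig K" unfolding sigma1_antichain_def
    using learn_sep[OF assms] by metis
next
  assume "sigma1_antichain sig K"
  then show "co_learnable sig K" using sep_learn[OF assms] by blast
qed

end
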